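(* Let $P$ be an irreducible aperiodic row-stochastic $n\times n$ matrix with centrality vector $\pi$. Then for every $z\in[0,1]^n$ the limit $\lim_{t\to\infty}W(z)^t=H(z)$ exists, where $H(z)$ is a row-stochastic matrix such that: (i) if $\mathcal S(z)=\emptyset$, then $H(z)=\mathbf{1}p(z)'$, where $$p(z)=\frac1{\gamma(z)}(I-[z])^{-1}\pi,\qquad \gamma(z)=\sum_{i\in\mathcal V}\frac{\pi_i}{1-z_i};$$ (ii) if $\mathcal S(z)\ne\emptyset$, then $H(z)$ is the unique solution of the linear system $$H_{ij}(z)=\sum_{k\in\mathcal V}P_{ik}H_{kj}(z)\quad\forall i\notin\mathcal S(z),\ j\in\mathcal V;\qquad H_{ij}(z)=\delta^i_j\quad\forall i\in\mathcal S(z),\ j\in\mathcal V,$$ where $\delta^i_j=1$ if $i=j$ and $0$ otherwise.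
   Context: $\mathcal V=\{1,\dots,n\}$. A row-stochastic matrix is a nonnegative square matrix with all row sums equal to $1$. $P$ is irreducible if the graph on $\mathcal V$ with edge $(i,j)$ iff $P_{ij}>0$ is strongly connected, and aperiodic if the gcd of the lengths of the cycles of this graph is $1$. The centrality vector $\pi$ is the unique probability vector with $P'\pi=\pi$ (it satisfies $\pi>0$). For $z\in[0,1]^n$, $[z]$ is the diagonal matrix with diagonal $z$, $W(z)=(I-[z])P+[z]$, and $\mathcal S(z)=\{i\in\mathcal V: z_i=1\}$. *)

theory Defs
  imports "HOL-Analysis.Analysis"
begin

text \<open>Square matrices over a finite index type 'n (the vertex set V, with n = CARD('n)).\<close>

primrec mat_pow :: "real^'n^'n \<Rightarrow> nat \<Rightarrow> real^'n^'n" where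
  "mat_pow A 0 = mat 1"
| "mat_pow A (Suc t) = mat_pow A t ** A"

definition row_stochastic :: "real^'n^'n \<Rightarrow> bool" where
  "row_stochastic A \<longleftrightarrow> (\<forall>i j. A $ i $ j \<ge> 0) \<and> (\<forall>i. (\<Sum>j\<in>UNIV. A $ i $ j) = 1)"

definition graph_edges :: "real^'n^'n \<Rightarrow> ('n \<times> 'n) set" where
  "graph_edges A = {(i, j). A $ i $ j > 0}"

definition irreducible_mat :: "real^'n^'n \<Rightarrow> bool" where
  "irreducible_mat A \<longleftrightarrow> (\<forall>i j. (i, j) \<in> (graph_edges A)\<^sup>*)"

definition cycle_lengths :: "real^'n^'n \<Rightarrow> nat set" where
  "cycle_lengths A = {m. m > 0 \<and> (\<exists>i. (i, i) \<in> (graph_edges A) ^^ m)}"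

definition aperiodic_mat :: "real^'n^'n \<Rightarrow> bool" where
  "aperiodic_mat A \<longleftrightarrow> Gcd (cycle_lengths A) = 1"

definition prob_vector :: "real^'n \<Rightarrow> bool" where
  "prob_vector v \<longleftrightarrow> (\<forall>i. v $ i \<ge> 0) \<and> (\<Sum>i\<in>UNIV. v $ i) = 1"

definition diag_mat :: "real^'n \<Rightarrow> real^'n^'n" where
  "diag_mat z = (\<chi> i j. if i = j then z $ i else 0)"

definition W_mat :: "real^'n^'n \<Rightarrow> real^'n \<Rightarrow> real^'n^'n" where
  "W_mat P z = (mat 1 - diag_mat z) ** P + diag_mat z"

definition S_set :: "real^'n \<Rightarrow> 'n set" where
  "S_set z = {i. z $ i = 1}"

definition gamma_fun :: "real^'n \<Rightarrow> real^'n \<Rightarrow> real" where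
  "gamma_fun \<pi> z = (\<Sum>i\<in>UNIV. \<pi> $ i / (1 - z $ i))"

definition p_vec :: "real^'n \<Rightarrow> real^'n \<Rightarrow> real^'n" where
  "p_vec \<pi> z = (1 / gamma_fun \<pi> z) *\<^sub>R (matrix_inv (mat 1 - diag_mat z) *v \<pi>)"

definition ones_outer :: "real^'n \<Rightarrow> real^'n^'n" where
  "ones_outer v = (\<chi> i j. v $ j)"

definition H_system :: "real^'n^'n \<Rightarrow> real^'n \<Rightarrow> real^'n^'n \<Rightarrow> bool" where
  "H_system P z H \<longleftrightarrow>
     (\<forall>i j. i \<notin> S_set z \<longrightarrow> H $ i $ j = (\<Sum>k\<in>UNIV. P $ i $ k * H $ k $ j)) \<and>
     (\<forall>i j. i \<in> S_set z \<longrightarrow> H $ i $ j = (if i = j then 1 else 0))"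

end

theory Submission
  imports Defs
begin

lemma mat_pow_add: "mat_pow A (a + b) = mat_pow A a ** mat_pow A b"
  by (induction b) (simp_all add: matrix_mul_assoc)

lemma mat_pow_Suc_left: "mat_pow A (Suc t) = A ** mat_pow A t"
  using mat_pow_add[of A 1 t] by simp

lemma mat1_entry: "(mat 1 :: real^'n^'n) $ i $ j = (if i = j then 1 else 0)"
  by (simp add: mat_def)

lemma mult_entry: "((A::real^'n^'n) ** B) $ i $ j = (\<Sum>k\<in>UNIV. A $ i $ k * B $ k $ j)"
  by (simp add: matrix_matrix_mult_def)

lemma rs_mult:
  assumes "row_stochastic (A::real^'n^'n)" "row_stochastic B"
  shows "row_stochastic (A ** B)"
proof -
  have nn: "\<And>i j. (A ** B) $ i $ j \<ge> 0"
    using assms unfolding row_stochastic_def mult_entry by (simp add: sum_nonneg)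
  have "(\<Sum>j\<in>UNIV. (A ** B) $ i $ j) = 1" for i
  proof -
    have "(\<Sum>j\<in>UNIV. (A ** B) $ i $ j) = (\<Sum>k\<in>UNIV. A $ i $ k * (\<Sum>j\<in>UNIV. B $ k $ j))"
      unfolding mult_entry sum_distrib_left by (rule sum.swap)
    also have "\<dots> = 1" using assms unfolding row_stochastic_def by simp
    finally show ?thesis .
  qed
  then show ?thesis using nn unfolding row_stochastic_def by simp
qed

lemma rs_mat1: "row_stochastic (mat 1 :: real^'n^'n)"
  unfolding row_stochastic_def mat1_entry by simp

lemma rs_pow: "row_stochastic A \<Longrightarrow> row_stochastic (mat_pow A t)"
  by (induction t) (simp_all add: rs_mat1 rs_mult)

lemma rs_le1: assumes "row_stochastic (A::real^'n^'n)" shows "A $ i $ j \<le> 1"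
proof -
  have "A $ i $ j \<le> (\<Sum>k\<in>UNIV. A $ i $ k)"
    by (rule member_le_sum) (use assms in \<open>auto simp: row_stochastic_def\<close>)
  then show ?thesis using assms by (simp add: row_stochastic_def)
qed

lemma W_entry: "(W_mat P z) $ i $ j = (1 - z $ i) * P $ i $ j + (if i = j then z $ i else 0)"
proof -
  have e: "(mat 1 - diag_mat z) $ i $ k = (if i = k then 1 - z $ i else 0)" for k
    by (simp add: diag_mat_def mat_def)
  have "((mat 1 - diag_mat z) ** P) $ i $ j = (\<Sum>k\<in>UNIV. (if i = k then (1 - z $ i) * P $ k $ j else 0))"
    unfolding mult_entry e by (rule sum.cong) auto
  also have "\<dots> = (1 - z $ i) * P $ i $ j" by simp
  finally show ?thesis unfolding W_mat_def by (simp add: diag_mat_def)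
qed

lemma rs_W:
  assumes "row_stochastic P" "\<forall>i. 0 \<le> z $ i \<and> z $ i \<le> 1"
  shows "row_stochastic (W_mat P z)"
proof -
  have "(\<Sum>j\<in>UNIV. W_mat P z $ i $ j) = 1" for i
    using assms unfolding W_entry row_stochastic_def
    by (simp add: sum.distrib sum_distrib_left[symmetric])
  moreover have "W_mat P z $ i $ j \<ge> 0" for i j
    using assms unfolding W_entry row_stochastic_def by simp
  ultimately show ?thesis unfolding row_stochastic_def by simp
qed

lemma pos_relpow:
  assumes "row_stochastic (A::real^'n^'n)"
  shows "0 < mat_pow A m $ i $ j \<longleftrightarrow> (i, j) \<in> (graph_edges A) ^^ m"
proof (induction m arbitrary: j)
  case 0
  then show ?case by (simp add: mat1_entry)
next
  case (Suc m)
  have nn1: "\<And>i k. mat_pow A m $ i $ k \<ge> 0" using rs_pow[OF assms] by (simp add: row_stochastic_def)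
  have nn2: "\<And>k j. A $ k $ j \<ge> 0" using assms by (simp add: row_stochastic_def)
  have "0 < mat_pow A (Suc m) $ i $ j \<longleftrightarrow> (\<exists>k. 0 < mat_pow A m $ i $ k * A $ k $ j)"
    unfolding mat_pow.simps mult_entry
  proof
    assume h: "0 < (\<Sum>k\<in>UNIV. mat_pow A m $ i $ k * A $ k $ j)"
    show "\<exists>k. 0 < mat_pow A m $ i $ k * A $ k $ j"
    proof (rule ccontr)
      assume "\<not> ?thesis"
      then have "\<forall>k. mat_pow A m $ i $ k * A $ k $ j = 0"
        using nn1 nn2 by (metis less_eq_real_def mult_nonneg_nonneg)
      then have "(\<Sum>k\<in>UNIV. mat_pow A m $ i $ k * A $ k $ j) = 0"
        by (intro sum.neutral) blast
      then show False using h by linarith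
    qed
  next
    assume "\<exists>k. 0 < mat_pow A m $ i $ k * A $ k $ j"
    then obtain k where "0 < mat_pow A m $ i $ k * A $ k $ j" by blast
    then show "0 < (\<Sum>k\<in>UNIV. mat_pow A m $ i $ k * A $ k $ j)"
      by (intro sum_pos2[where i=k]) (auto intro!: mult_nonneg_nonneg nn1 nn2)
  qed
  also have "\<dots> \<longleftrightarrow> (\<exists>k. (i, k) \<in> (graph_edges A) ^^ m \<and> (k, j) \<in> graph_edges A)"
  proof -
    have "0 < mat_pow A m $ i $ k * A $ k $ j \<longleftrightarrow> 0 < mat_pow A m $ i $ k \<and> 0 < A $ k $ j" for k
      using nn1[of i k] nn2[of k j] by (smt (verit) mult_le_0_iff mult_pos_pos)
    then show ?thesis using Suc.IH unfolding graph_edges_def by auto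
  qed
  also have "\<dots> \<longleftrightarrow> (i, j) \<in> (graph_edges A) ^^ Suc m" by auto
  finally show ?case .
qed

lemma mult_mem:
  assumes "0 \<in> S" "\<And>x y. x \<in> S \<Longrightarrow> y \<in> S \<Longrightarrow> x + y \<in> S" "s \<in> S"
  shows "k * (s::nat) \<in> S"
  by (induction k) (use assms in auto)

lemma consec:
  fixes S :: "nat set"
  assumes z: "0 \<in> S" and add: "\<And>x y. x \<in> S \<Longrightarrow> y \<in> S \<Longrightarrow> x + y \<in> S" and g: "Gcd S = 1"
  shows "\<exists>y. y \<in> S \<and> y + 1 \<in> S"
proof -
  define G where "G = {k::nat. \<exists>x\<in>S. \<exists>y\<in>S. x = y + k}"
  have Gadd: "a \<in> G \<Longrightarrow> b \<in> G \<Longrightarrow> a + b \<in> G" for a b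
  proof -
    assume "a \<in> G" "b \<in> G"
    then obtain x y x' y' where "x\<in>S" "y\<in>S" "x = y + a" "x'\<in>S" "y'\<in>S" "x' = y' + b"
      unfolding G_def by blast
    then show "a + b \<in> G" unfolding G_def
      by (intro CollectI bexI[of _ "x + x'"] bexI[of _ "y + y'"]) (auto intro: add)
  qed
  have Gsub: "a \<in> G \<Longrightarrow> b \<in> G \<Longrightarrow> b \<le> a \<Longrightarrow> a - b \<in> G" for a b
  proof -
    assume "a \<in> G" "b \<in> G" "b \<le> a"
    then obtain x y x' y' where "x\<in>S" "y\<in>S" "x = y + a" "x'\<in>S" "y'\<in>S" "x' = y' + b"
      unfolding G_def by blast
    then show "a - b \<in> G" unfolding G_def using \<open>b \<le> a\<close>
      by (intro CollectI bexI[of _ "x + y'"] bexI[of _ "y + x'"]) (auto intro: add)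
  qed
  have SG: "s \<in> S \<Longrightarrow> s \<in> G" for s unfolding G_def using z by force
  have G0: "0 \<in> G" using SG z by blast
  have Gmul: "a \<in> G \<Longrightarrow> q * a \<in> G" for a q
    by (induction q) (auto intro: Gadd G0)
  obtain s where s: "s \<in> S" "s > 0"
  proof -
    have "\<not> S \<subseteq> {0}" using g Gcd_0_iff[of S] by auto
    then show ?thesis using that by blast
  qed
  define d where "d = (LEAST k. k \<in> G \<and> k > 0)"
  have d: "d \<in> G" "d > 0"
    using LeastI[of "\<lambda>k. k \<in> G \<and> k > 0" s] SG[OF s(1)] s(2) unfolding d_def by auto
  have dmin: "k \<in> G \<Longrightarrow> k > 0 \<Longrightarrow> d \<le> k" for k unfolding d_def by (rule Least_le) simp
  have "d dvd x" if "x \<in> S" for x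
  proof -
    have "x mod d = x - (x div d) * d" by (simp add: minus_div_mult_eq_mod)
    moreover have "x - (x div d) * d \<in> G"
      by (rule Gsub) (use SG[OF that] Gmul[OF d(1)] in \<open>auto simp: times_div_less_eq_dividend\<close>)
    ultimately have "x mod d \<in> G" by simp
    moreover have "x mod d < d" using d(2) by simp
    ultimately have "x mod d = 0" using dmin by (meson leD neq0_conv)
    then show ?thesis by auto
  qed
  then have "d dvd Gcd S" by (rule Gcd_greatest)
  then have "d = 1" using g by simp
  then show ?thesis using d(1) unfolding G_def by auto
qed

lemma eventually_all:
  fixes S :: "nat set"
  assumes z: "0 \<in> S" and add: "\<And>x y. x \<in> S \<Longrightarrow> y \<in> S \<Longrightarrow> x + y \<in> S" and g: "Gcd S = 1"
  shows "\<exists>N. \<forall>n\<ge>N. n \<in> S"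
proof -
  obtain a where a: "a \<in> S" "a + 1 \<in> S" using consec[OF assms] by blast
  show ?thesis
  proof (cases "a = 0")
    case True
    then show ?thesis using mult_mem[OF z add a(2)] by (metis mult.right_neutral add_0)
  next
    case False
    have "n \<in> S" if "n \<ge> a * a" for n
    proof -
      define q where "q = n div a"
      define r where "r = n mod a"
      have "r < a" using False r_def by simp
      have "a * a \<le> a * q + r" using that q_def r_def by simp
      then have "a \<le> q" using \<open>r < a\<close> False
      proof -
        have "a * a < a * (q + 1)" using \<open>a * a \<le> a * q + r\<close> \<open>r < a\<close> by simp
        then have "a < q + 1" by (simp only: mult_less_cancel1)
        then show ?thesis by simp
      qed
      then have "n = (q - r) * a + r * (a + 1)" using \<open>r < a\<close> q_def r_def
        by (simp add: algebra_simps diff_mult_distrib2) 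
      moreover have "(q - r) * a + r * (a + 1) \<in> S"
        by (intro add mult_mem[OF z add] a)
      ultimately show ?thesis by simp
    qed
    then show ?thesis by blast
  qed
qed

lemma relpow_trans:
  "(x, y) \<in> (R::('a \<times> 'a) set) ^^ m \<Longrightarrow> (y, z) \<in> R ^^ n \<Longrightarrow> (x, z) \<in> R ^^ (m + n)"
  by (subst relpow_add) (rule relcompI)

lemma primitive:
  fixes E :: "('n::finite \<times> 'n) set"
  assumes irr: "\<forall>i j. (i, j) \<in> E\<^sup>*" and g: "Gcd {m. m > 0 \<and> (\<exists>i. (i, i) \<in> E ^^ m)} = 1"
  shows "\<exists>M. \<forall>i j. (i, j) \<in> E ^^ M"
proof -
  fix r :: 'n
  define D where "D = {m. (r, r) \<in> E ^^ m}"
  have D0: "0 \<in> D" unfolding D_def by simp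
  have Dadd: "x \<in> D \<Longrightarrow> y \<in> D \<Longrightarrow> x + y \<in> D" for x y
    unfolding D_def using relpow_trans by fastforce
  have "Gcd D dvd c" if "c \<in> {m. m > 0 \<and> (\<exists>i. (i, i) \<in> E ^^ m)}" for c
  proof -
    from that obtain v where v: "(v, v) \<in> E ^^ c" by auto
    obtain a where a: "(r, v) \<in> E ^^ a" using irr rtrancl_power by blast
    obtain b where b: "(v, r) \<in> E ^^ b" using irr rtrancl_power by blast
    have "a + b \<in> D" using relpow_trans[OF a b] unfolding D_def by simp
    moreover have "a + c + b \<in> D" using relpow_trans[OF relpow_trans[OF a v] b] unfolding D_def by simp
    ultimately have "Gcd D dvd a + b" "Gcd D dvd (a + b) + c"
      by (auto intro: Gcd_dvd simp: ac_simps)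
    then show ?thesis by (simp add: dvd_add_right_iff)
  qed
  then have "Gcd D dvd Gcd {m. m > 0 \<and> (\<exists>i. (i, i) \<in> E ^^ m)}" by (rule Gcd_greatest)
  then have "Gcd D dvd 1" using g by simp
  then have "Gcd D = 1" by simp
  then obtain N where N: "\<forall>n\<ge>N. n \<in> D" using eventually_all[OF D0 Dadd] by blast
  have "\<forall>i. \<exists>n. (i, r) \<in> E ^^ n" using irr rtrancl_power by blast
  then obtain a where a: "\<forall>i. (i, r) \<in> E ^^ a i" by (rule choice[THEN exE])
  have "\<forall>j. \<exists>n. (r, j) \<in> E ^^ n" using irr rtrancl_power by blast
  then obtain b where b: "\<forall>j. (r, j) \<in> E ^^ b j" by (rule choice[THEN exE])
  define M where "M = (\<Sum>i\<in>UNIV. a i) + N + (\<Sum>j\<in>UNIV. b j)"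
  have "(i, j) \<in> E ^^ M" for i j
  proof -
    have ai: "a i \<le> (\<Sum>i\<in>UNIV. a i)" by (rule member_le_sum) auto
    have bj: "b j \<le> (\<Sum>j\<in>UNIV. b j)" by (rule member_le_sum) auto
    define m where "m = M - a i - b j"
    have "m \<ge> N" using ai bj unfolding m_def M_def by linarith
    then have "(r, r) \<in> E ^^ m" using N unfolding D_def by auto
    moreover have "M = a i + m + b j" using ai bj unfolding m_def M_def by linarith
    ultimately show ?thesis using relpow_trans[OF relpow_trans[OF a[rule_format, of i]] b[rule_format, of j]] by simp
  qed
  then show ?thesis by blast
qed

lemma relpow_mono': "(R::('a \<times> 'a) set) \<subseteq> R' \<Longrightarrow> R ^^ n \<subseteq> R' ^^ n"
  by (induction n) auto


lemma conv_bound: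
  fixes w v :: "'n::finite \<Rightarrow> real"
  assumes "\<forall>k. w k \<ge> 0" "(\<Sum>k\<in>UNIV. w k) = 1" "\<forall>k. lo \<le> v k \<and> v k \<le> hi"
  shows "lo \<le> (\<Sum>k\<in>UNIV. w k * v k) \<and> (\<Sum>k\<in>UNIV. w k * v k) \<le> hi"
proof
  have "lo = (\<Sum>k\<in>UNIV. w k * lo)" using assms(2) by (simp add: sum_distrib_right[symmetric])
  also have "\<dots> \<le> (\<Sum>k\<in>UNIV. w k * v k)"
    by (rule sum_mono) (use assms in \<open>auto intro: mult_left_mono\<close>)
  finally show "lo \<le> (\<Sum>k\<in>UNIV. w k * v k)" .
  have "(\<Sum>k\<in>UNIV. w k * v k) \<le> (\<Sum>k\<in>UNIV. w k * hi)"
    by (rule sum_mono) (use assms in \<open>auto intro: mult_left_mono\<close>)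
  also have "\<dots> = hi" using assms(2) by (simp add: sum_distrib_right[symmetric])
  finally show "(\<Sum>k\<in>UNIV. w k * v k) \<le> hi" .
qed

lemma contract:
  fixes B :: "real^'n^'n" and v :: "'n \<Rightarrow> real"
  assumes rs: "row_stochastic B" and d: "\<forall>i. \<delta> \<le> B $ i $ j0" "0 \<le> \<delta>"
    and v: "\<forall>k. lo \<le> v k \<and> v k \<le> hi"
  shows "\<delta> * v j0 + (1 - \<delta>) * lo \<le> (\<Sum>k\<in>UNIV. B $ i $ k * v k) \<and>
         (\<Sum>k\<in>UNIV. B $ i $ k * v k) \<le> \<delta> * v j0 + (1 - \<delta>) * hi"
proof -
  define c where "c k = B $ i $ k - (if k = j0 then \<delta> else 0)" for k
  have c0: "\<forall>k. c k \<ge> 0" using rs d unfolding c_def row_stochastic_def by auto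
  have cs: "(\<Sum>k\<in>UNIV. c k) = 1 - \<delta>"
    using rs unfolding c_def row_stochastic_def by (simp add: sum_subtractf)
  have eq: "(\<Sum>k\<in>UNIV. B $ i $ k * v k) = \<delta> * v j0 + (\<Sum>k\<in>UNIV. c k * v k)"
  proof -
    have "(\<Sum>k\<in>UNIV. B $ i $ k * v k) = (\<Sum>k\<in>UNIV. (if k = j0 then \<delta> * v k else 0) + c k * v k)"
      by (rule sum.cong) (auto simp: c_def algebra_simps)
    also have "\<dots> = \<delta> * v j0 + (\<Sum>k\<in>UNIV. c k * v k)" by (simp add: sum.distrib)
    finally show ?thesis .
  qed
  have lo: "(1 - \<delta>) * lo \<le> (\<Sum>k\<in>UNIV. c k * v k)"
  proof -
    have "(1 - \<delta>) * lo = (\<Sum>k\<in>UNIV. c k * lo)" using cs by (simp add: sum_distrib_right[symmetric])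
    also have "\<dots> \<le> (\<Sum>k\<in>UNIV. c k * v k)"
      by (rule sum_mono) (use c0 v in \<open>auto intro: mult_left_mono\<close>)
    finally show ?thesis .
  qed
  have hi: "(\<Sum>k\<in>UNIV. c k * v k) \<le> (1 - \<delta>) * hi"
  proof -
    have "(\<Sum>k\<in>UNIV. c k * v k) \<le> (\<Sum>k\<in>UNIV. c k * hi)"
      by (rule sum_mono) (use c0 v in \<open>auto intro: mult_left_mono\<close>)
    also have "\<dots> = (1 - \<delta>) * hi" using cs by (simp add: sum_distrib_right[symmetric])
    finally show ?thesis .
  qed
  show ?thesis using eq lo hi by linarith
qed

lemma mat_tendsto:
  fixes X :: "nat \<Rightarrow> real^'n^'n"
  assumes "\<forall>i j. (\<lambda>t. X t $ i $ j) \<longlonglongrightarrow> H $ i $ j"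
  shows "X \<longlonglongrightarrow> H"
proof (rule vec_tendstoI)
  fix i
  show "(\<lambda>t. X t $ i) \<longlonglongrightarrow> H $ i"
    by (rule vec_tendstoI) (use assms in blast)
qed

lemma rs_limit:
  fixes X :: "nat \<Rightarrow> real^'n^'n"
  assumes "\<forall>t. row_stochastic (X t)" "\<forall>i j. (\<lambda>t. X t $ i $ j) \<longlonglongrightarrow> H $ i $ j"
  shows "row_stochastic H"
  unfolding row_stochastic_def
proof safe
  fix i j
  show "0 \<le> H $ i $ j"
    by (rule LIMSEQ_le_const[OF assms(2)[rule_format, of i j]]) (use assms(1) in \<open>auto simp: row_stochastic_def\<close>)
next
  fix i
  have "(\<lambda>t. \<Sum>j\<in>UNIV. X t $ i $ j) \<longlonglongrightarrow> (\<Sum>j\<in>UNIV. H $ i $ j)"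
    by (intro tendsto_sum) (use assms(2) in blast)
  moreover have "(\<lambda>t. \<Sum>j\<in>UNIV. X t $ i $ j) = (\<lambda>t. 1)" using assms(1) by (simp add: row_stochastic_def)
  ultimately show "(\<Sum>j\<in>UNIV. H $ i $ j) = 1" using LIMSEQ_unique tendsto_const by metis
qed


lemma stat_pow:
  fixes A :: "real^'n^'n" and p :: "real^'n"
  assumes stat: "\<forall>j. (\<Sum>i\<in>UNIV. p $ i * A $ i $ j) = p $ j"
  shows "(\<Sum>i\<in>UNIV. p $ i * mat_pow A t $ i $ j) = p $ j"
proof (induction t arbitrary: j)
  case 0
  then show ?case by (simp add: mat1_entry if_distrib cong: if_cong)
next
  case (Suc t)
  have "(\<Sum>i\<in>UNIV. p $ i * mat_pow A (Suc t) $ i $ j)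
      = (\<Sum>i\<in>UNIV. \<Sum>k\<in>UNIV. p $ i * mat_pow A t $ i $ k * A $ k $ j)"
    by (simp add: mult_entry sum_distrib_left mult.assoc)
  also have "\<dots> = (\<Sum>k\<in>UNIV. \<Sum>i\<in>UNIV. p $ i * mat_pow A t $ i $ k * A $ k $ j)"
    by (rule sum.swap)
  also have "\<dots> = (\<Sum>k\<in>UNIV. p $ k * A $ k $ j)"
    by (simp add: sum_distrib_right[symmetric] Suc.IH)
  also have "\<dots> = p $ j" using stat by simp
  finally show ?case .
qed

lemma case_empty:
  fixes A :: "real^'n^'n" and p :: "real^'n"
  assumes rs: "row_stochastic A" and pos: "\<forall>i j. 0 < mat_pow A M $ i $ j"
    and pv: "prob_vector p" and stat: "\<forall>j. (\<Sum>i\<in>UNIV. p $ i * A $ i $ j) = p $ j"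
  shows "(\<lambda>t. mat_pow A t) \<longlonglongrightarrow> ones_outer p"
proof (rule mat_tendsto, intro allI)
  fix i0 j :: 'n
  fix j0 :: 'n
  have rsp: "\<And>t. row_stochastic (mat_pow A t)" using rs_pow[OF rs] .
  define \<delta> where "\<delta> = Min (range (\<lambda>i. mat_pow A M $ i $ j0))"
  have dpos: "0 < \<delta>"
  proof -
    have "\<delta> \<in> range (\<lambda>i. mat_pow A M $ i $ j0)" unfolding \<delta>_def by (rule Min_in) auto
    then show ?thesis using pos by auto
  qed
  have dle: "\<forall>i. \<delta> \<le> mat_pow A M $ i $ j0" unfolding \<delta>_def by (auto intro: Min_le)
  have propg: "\<forall>i. lo \<le> mat_pow A t $ i $ j \<and> mat_pow A t $ i $ j \<le> hi"
    if h: "\<forall>i. lo \<le> mat_pow A s $ i $ j \<and> mat_pow A s $ i $ j \<le> hi" and ts: "s \<le> t" for lo hi s t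
  proof
    fix i
    have "mat_pow A t = mat_pow A (t - s) ** mat_pow A s" using ts mat_pow_add[of A "t - s" s] by simp
    then have "mat_pow A t $ i $ j = (\<Sum>k\<in>UNIV. mat_pow A (t - s) $ i $ k * mat_pow A s $ k $ j)"
      by (simp add: mult_entry)
    moreover have "lo \<le> (\<Sum>k\<in>UNIV. mat_pow A (t - s) $ i $ k * mat_pow A s $ k $ j) \<and>
        (\<Sum>k\<in>UNIV. mat_pow A (t - s) $ i $ k * mat_pow A s $ k $ j) \<le> hi"
      by (rule conv_bound) (use rsp[of "t - s"] h in \<open>auto simp: row_stochastic_def\<close>)
    ultimately show "lo \<le> mat_pow A t $ i $ j \<and> mat_pow A t $ i $ j \<le> hi" by simp
  qed
  have main: "\<exists>lo hi. hi - lo \<le> (1 - \<delta>) ^ q \<and>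
      (\<forall>t\<ge>q * M. \<forall>i. lo \<le> mat_pow A t $ i $ j \<and> mat_pow A t $ i $ j \<le> hi)" for q
  proof (induction q)
    case 0
    have "\<forall>t i. 0 \<le> mat_pow A t $ i $ j \<and> mat_pow A t $ i $ j \<le> 1"
      using rsp rs_le1[OF rsp] by (auto simp: row_stochastic_def)
    then show ?case by (intro exI[of _ 0] exI[of _ 1]) auto
  next
    case (Suc q)
    then obtain lo hi where lh: "hi - lo \<le> (1 - \<delta>) ^ q"
      "\<forall>t\<ge>q * M. \<forall>i. lo \<le> mat_pow A t $ i $ j \<and> mat_pow A t $ i $ j \<le> hi" by blast
    define v where "v k = mat_pow A (q * M) $ k $ j" for k
    have v: "\<forall>k. lo \<le> v k \<and> v k \<le> hi" using lh(2) unfolding v_def by auto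
    define lo' where "lo' = \<delta> * v j0 + (1 - \<delta>) * lo"
    define hi' where "hi' = \<delta> * v j0 + (1 - \<delta>) * hi"
    have hq: "\<forall>i. lo' \<le> mat_pow A (M + q * M) $ i $ j \<and> mat_pow A (M + q * M) $ i $ j \<le> hi'"
    proof
      fix i
      have "mat_pow A (M + q * M) $ i $ j = (\<Sum>k\<in>UNIV. mat_pow A M $ i $ k * v k)"
        unfolding mat_pow_add v_def by (simp add: mult_entry)
      then show "lo' \<le> mat_pow A (M + q * M) $ i $ j \<and> mat_pow A (M + q * M) $ i $ j \<le> hi'"
        using contract[OF rsp dle less_imp_le[OF dpos] v, of i] unfolding lo'_def hi'_def by simp
    qed
    have "\<forall>t\<ge>Suc q * M. \<forall>i. lo' \<le> mat_pow A t $ i $ j \<and> mat_pow A t $ i $ j \<le> hi'"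
    proof (intro allI impI)
      fix t i assume "Suc q * M \<le> t"
      then have "M + q * M \<le> t" by simp
      from propg[OF hq this] show "lo' \<le> mat_pow A t $ i $ j \<and> mat_pow A t $ i $ j \<le> hi'" by blast
    qed
    moreover have "hi' - lo' \<le> (1 - \<delta>) ^ Suc q"
    proof -
      have d1: "\<delta> \<le> 1" using dle rs_le1[OF rsp] order_trans by blast
      have "hi' - lo' = (1 - \<delta>) * (hi - lo)" unfolding hi'_def lo'_def by (simp add: algebra_simps)
      also have "\<dots> \<le> (1 - \<delta>) * (1 - \<delta>) ^ q" using lh(1) d1 by (intro mult_left_mono) auto
      finally show ?thesis by simp
    qed
    ultimately show ?case by blast
  qed
  show "(\<lambda>t. mat_pow A t $ i0 $ j) \<longlonglongrightarrow> ones_outer p $ i0 $ j"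
  proof (rule LIMSEQ_I)
    fix r :: real assume r: "0 < r"
    obtain q where q: "(1 - \<delta>) ^ q < r" using real_arch_pow_inv[OF r, of "1 - \<delta>"] dpos by auto
    obtain lo hi where lh: "hi - lo \<le> (1 - \<delta>) ^ q"
      "\<forall>t\<ge>q * M. \<forall>i. lo \<le> mat_pow A t $ i $ j \<and> mat_pow A t $ i $ j \<le> hi" using main by blast
    have "norm (mat_pow A t $ i0 $ j - ones_outer p $ i0 $ j) < r" if t: "t \<ge> q * M" for t
    proof -
      have "lo \<le> (\<Sum>i\<in>UNIV. p $ i * mat_pow A t $ i $ j) \<and> (\<Sum>i\<in>UNIV. p $ i * mat_pow A t $ i $ j) \<le> hi"
        by (rule conv_bound) (use pv lh(2) t in \<open>auto simp: prob_vector_def\<close>)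
      then have "lo \<le> p $ j \<and> p $ j \<le> hi" using stat_pow[OF stat] by simp
      moreover have "lo \<le> mat_pow A t $ i0 $ j \<and> mat_pow A t $ i0 $ j \<le> hi" using lh(2) t by auto
      ultimately show ?thesis using lh(1) q by (simp add: ones_outer_def abs_if)
    qed
    then show "\<exists>no. \<forall>n\<ge>no. norm (mat_pow A n $ i0 $ j - ones_outer p $ i0 $ j) < r" by blast
  qed
qed


lemma case_nonempty:
  fixes A :: "real^'n^'n" and S :: "'n set"
  assumes rs: "row_stochastic A"
    and ab: "\<forall>i\<in>S. \<forall>j. A $ i $ j = (if i = j then 1 else 0)"
    and reach0: "\<forall>i. \<exists>s\<in>S. (i, s) \<in> {(i, k). i \<notin> S \<and> 0 < A $ i $ k}\<^sup>*"
  shows "\<exists>H. (\<forall>i j. (\<lambda>t. mat_pow A t $ i $ j) \<longlonglongrightarrow> H $ i $ j) \<and> (\<forall>i j. j \<notin> S \<longrightarrow> H $ i $ j = 0)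
     \<and> (\<forall>i\<in>S. \<forall>j. H $ i $ j = (if i = j then 1 else 0))"
proof -
  have rsp: "\<And>t. row_stochastic (mat_pow A t)" using rs_pow[OF rs] .
  have nn: "\<And>t i j. 0 \<le> mat_pow A t $ i $ j" using rsp by (simp add: row_stochastic_def)
  have nnA: "\<And>i j. 0 \<le> A $ i $ j" using rs by (simp add: row_stochastic_def)
  have abp: "mat_pow A t $ i $ j = (if i = j then 1 else 0)" if "i \<in> S" for t i j
  proof (induction t arbitrary: j)
    case 0 then show ?case by (simp add: mat1_entry)
  next
    case (Suc t)
    have "mat_pow A (Suc t) $ i $ j = (\<Sum>k\<in>UNIV. (if i = k then 1 else 0) * A $ k $ j)"
      by (simp add: mult_entry Suc.IH)
    also have "\<dots> = (\<Sum>k\<in>UNIV. if i = k then A $ k $ j else 0)" by (rule sum.cong) auto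
    also have "\<dots> = A $ i $ j" by simp
    finally show ?case using ab that by simp
  qed
  have monoS: "mat_pow A t $ i $ j \<le> mat_pow A (Suc t) $ i $ j" if "j \<in> S" for t i j
  proof -
    have "mat_pow A t $ i $ j * A $ j $ j \<le> (\<Sum>k\<in>UNIV. mat_pow A t $ i $ k * A $ k $ j)"
      by (rule member_le_sum) (auto intro: mult_nonneg_nonneg nn nnA)
    then show ?thesis using ab that by (simp add: mult_entry)
  qed
  define a where "a t i = (\<Sum>k\<in>UNIV. if k \<in> S then mat_pow A t $ i $ k else 0)" for t i
  define u where "u t i = (\<Sum>k\<in>UNIV. if k \<in> S then 0 else mat_pow A t $ i $ k)" for t i
  have au: "a t i + u t i = 1" for t i
  proof -
    have "a t i + u t i = (\<Sum>k\<in>UNIV. mat_pow A t $ i $ k)"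
      unfolding a_def u_def sum.distrib[symmetric] by (rule sum.cong) auto
    then show ?thesis using rsp by (simp add: row_stochastic_def)
  qed
  have amono: "a t i \<le> a (Suc t) i" for t i
    unfolding a_def by (rule sum_mono) (simp add: monoS del: mat_pow.simps)
  have amono': "a t i \<le> a t' i" if "t \<le> t'" for t t' i
    using lift_Suc_mono_le[of "\<lambda>t. a t i", OF amono that] .
  have a0: "a 0 i = 1" if "i \<in> S" for i
  proof -
    have "a 0 i = (\<Sum>k\<in>UNIV. if i = k then 1 else 0)"
      unfolding a_def using that by (intro sum.cong) (auto simp: mat1_entry)
    then show ?thesis by simp
  qed
  have aSuc: "a (Suc t) i = (\<Sum>k\<in>UNIV. A $ i $ k * a t k)" for t i
  proof -
    have "a (Suc t) i = (\<Sum>j\<in>UNIV. \<Sum>k\<in>UNIV. if j \<in> S then A $ i $ k * mat_pow A t $ k $ j else 0)"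
      unfolding a_def mat_pow_Suc_left mult_entry by (rule sum.cong) auto
    also have "\<dots> = (\<Sum>k\<in>UNIV. \<Sum>j\<in>UNIV. if j \<in> S then A $ i $ k * mat_pow A t $ k $ j else 0)"
      by (rule sum.swap)
    also have "\<dots> = (\<Sum>k\<in>UNIV. A $ i $ k * a t k)"
      unfolding a_def sum_distrib_left by (rule sum.cong) (auto intro: sum.cong)
    finally show ?thesis .
  qed
  have reach: "\<exists>t. 0 < a t i" for i
  proof -
    obtain s where s: "s \<in> S" "(i, s) \<in> {(i, k). i \<notin> S \<and> 0 < A $ i $ k}\<^sup>*" using reach0 by blast
    from s(2) show ?thesis
    proof (induction rule: converse_rtrancl_induct)
      case base
      then show ?case using a0[OF s(1)] by (intro exI[of _ 0]) simp
    next
      case (step y z)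
      then obtain t where t: "0 < a t z" by blast
      have anon: "0 \<le> a t k" for k unfolding a_def by (rule sum_nonneg) (auto intro: nn)
      have "A $ y $ z * a t z \<le> (\<Sum>k\<in>UNIV. A $ y $ k * a t k)"
        by (rule member_le_sum) (auto intro: mult_nonneg_nonneg nnA anon)
      moreover have "0 < A $ y $ z * a t z" using step(1) t by auto
      ultimately show ?case using aSuc by (intro exI[of _ "Suc t"]) (metis order_less_le_trans)
    qed
  qed
  then obtain tt where tt: "\<forall>i. 0 < a (tt i) i" by metis
  define T where "T = (\<Sum>i\<in>UNIV. tt i)"
  have aT: "0 < a T i" for i
  proof -
    have "tt i \<le> T" unfolding T_def by (rule member_le_sum) auto
    then show ?thesis using amono' tt by (meson order_less_le_trans)
  qed
  define c where "c = Max (range (u T))"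
  have c1: "c < 1"
  proof -
    have "c \<in> range (u T)" unfolding c_def by (rule Max_in) auto
    then show ?thesis using aT au by (metis add.commute less_add_same_cancel2 rangeE)
  qed
  have ucle: "u T i \<le> c" for i unfolding c_def by (rule Max_ge) auto
  have unn: "0 \<le> u t i" for t i unfolding u_def by (rule sum_nonneg) (auto intro: nn)
  have c0: "0 \<le> c" using ucle unn order_trans by blast
  have uS: "u t k = 0" if "k \<in> S" for t k
    unfolding u_def using that abp[OF that] by (intro sum.neutral) auto
  have uadd: "u (s + t) i = (\<Sum>k\<in>UNIV. mat_pow A s $ i $ k * u t k)" for s t i
  proof -
    have "u (s + t) i = (\<Sum>j\<in>UNIV. \<Sum>k\<in>UNIV. if j \<in> S then 0 else mat_pow A s $ i $ k * mat_pow A t $ k $ j)"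
      unfolding u_def mat_pow_add mult_entry by (rule sum.cong) auto
    also have "\<dots> = (\<Sum>k\<in>UNIV. \<Sum>j\<in>UNIV. if j \<in> S then 0 else mat_pow A s $ i $ k * mat_pow A t $ k $ j)"
      by (rule sum.swap)
    also have "\<dots> = (\<Sum>k\<in>UNIV. mat_pow A s $ i $ k * u t k)"
      unfolding u_def sum_distrib_left by (rule sum.cong) (auto intro: sum.cong)
    finally show ?thesis .
  qed
  have udecay: "u (q * T) i \<le> c ^ q" for q i
  proof (induction q arbitrary: i)
    case 0
    have "0 \<le> a 0 i" unfolding a_def by (rule sum_nonneg) (simp add: nn del: mat_pow.simps)
    then show ?case using au[of 0 i] by simp
  next
    case (Suc q)
    have "u (Suc q * T) i = (\<Sum>k\<in>UNIV. mat_pow A T $ i $ k * u (q * T) k)"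
      using uadd[of T "q * T" i] by simp
    also have "\<dots> \<le> (\<Sum>k\<in>UNIV. mat_pow A T $ i $ k * (if k \<in> S then 0 else c ^ q))"
      by (rule sum_mono) (auto intro!: mult_left_mono nn simp: uS Suc.IH)
    also have "\<dots> = c ^ q * u T i"
      unfolding u_def sum_distrib_left by (rule sum.cong) auto
    also have "\<dots> \<le> c ^ q * c" using ucle c0 by (intro mult_left_mono) auto
    finally show ?case by (simp add: mult.commute)
  qed
  have uanti: "u t' i \<le> u t i" if "t \<le> t'" for t t' i
    using amono'[OF that, of i] au[of t i] au[of t' i] by linarith
  have conv0: "\<exists>L. (\<lambda>t. mat_pow A t $ i $ j) \<longlonglongrightarrow> L \<and> (j \<notin> S \<longrightarrow> L = 0)" for i j
  proof (cases "j \<in> S")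
    case True
    have "incseq (\<lambda>t. mat_pow A t $ i $ j)"
      by (rule incseq_SucI) (use monoS[OF True] in \<open>simp del: mat_pow.simps\<close>)
    moreover have "\<forall>t. mat_pow A t $ i $ j \<le> 1" using rs_le1[OF rsp] by blast
    ultimately obtain L where "(\<lambda>t. mat_pow A t $ i $ j) \<longlonglongrightarrow> L"
      by (rule incseq_convergent)
    then show ?thesis using True by blast
  next
    case False
    have le: "mat_pow A t $ i $ j \<le> u t i" for t
    proof -
      have "(if j \<in> S then 0 else mat_pow A t $ i $ j) \<le> u t i"
        unfolding u_def by (rule member_le_sum) (auto intro: nn)
      then show ?thesis using False by simp
    qed
    have "(\<lambda>t. mat_pow A t $ i $ j) \<longlonglongrightarrow> 0"
    proof (rule LIMSEQ_I)
      fix r :: real assume r: "0 < r"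
      obtain q where q: "c ^ q < r" using real_arch_pow_inv[OF r c1] by blast
      have "norm (mat_pow A t $ i $ j - 0) < r" if "t \<ge> q * T" for t
        using le[of t] uanti[OF that, of i] udecay[of q i] q nn[of t i j] by simp
      then show "\<exists>no. \<forall>n\<ge>no. norm (mat_pow A n $ i $ j - 0) < r" by blast
    qed
    then show ?thesis using False by blast
  qed
  have conv: "\<exists>L. (\<lambda>t. mat_pow A t $ i $ j) \<longlonglongrightarrow> L \<and> (j \<notin> S \<longrightarrow> L = 0)
      \<and> (i \<in> S \<longrightarrow> L = (if i = j then 1 else 0))" for i j
  proof (cases "i \<in> S")
    case True
    have "(\<lambda>t. mat_pow A t $ i $ j) = (\<lambda>t. if i = j then 1 else 0)" using abp[OF True] by simp
    then have "(\<lambda>t. mat_pow A t $ i $ j) \<longlonglongrightarrow> (if i = j then 1 else 0)" by simp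
    moreover have "j \<notin> S \<longrightarrow> (if i = j then 1 else (0::real)) = 0" using True by auto
    ultimately show ?thesis by blast
  next
    case False
    then show ?thesis using conv0[of i j] by blast
  qed
  define H :: "real^'n^'n" where "H = (\<chi> i j. lim (\<lambda>t. mat_pow A t $ i $ j))"
  have "(\<lambda>t. mat_pow A t $ i $ j) \<longlonglongrightarrow> H $ i $ j \<and> (j \<notin> S \<longrightarrow> H $ i $ j = 0)
     \<and> (i \<in> S \<longrightarrow> H $ i $ j = (if i = j then 1 else 0))" for i j
  proof -
    obtain L where L: "(\<lambda>t. mat_pow A t $ i $ j) \<longlonglongrightarrow> L" "j \<notin> S \<longrightarrow> L = 0"
       "i \<in> S \<longrightarrow> L = (if i = j then 1 else 0)" using conv by blast
    then have "H $ i $ j = L" unfolding H_def by (simp add: limI)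
    then show ?thesis using L by simp
  qed
  then show ?thesis by blast
qed

lemma diag_mult: "diag_mat d ** diag_mat e = diag_mat (\<chi> i. d $ i * e $ i)"
proof -
  have "(diag_mat d ** diag_mat e) $ i $ j = diag_mat (\<chi> i. d $ i * e $ i) $ i $ j" for i j
  proof -
    have "(diag_mat d ** diag_mat e) $ i $ j = (\<Sum>k\<in>UNIV. if k = i then (if i = j then d $ i * e $ i else 0) else 0)"
      unfolding mult_entry diag_mat_def by (rule sum.cong) auto
    then show ?thesis by (simp add: diag_mat_def)
  qed
  then show ?thesis by (simp add: vec_eq_iff)
qed

lemma diag_one: "diag_mat (\<chi> i. 1) = (mat 1 :: real^'n^'n)"
  by (simp add: vec_eq_iff diag_mat_def mat_def)

lemma diag_inv:
  assumes "\<forall>i. d $ i \<noteq> (0::real)"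
  shows "matrix_inv (diag_mat d) = diag_mat (\<chi> i. 1 / d $ i)"
proof -
  let ?E = "diag_mat (\<chi> i. 1 / d $ i)"
  have e1: "diag_mat d ** ?E = mat 1" using assms by (simp add: diag_mult diag_one[symmetric])
  have e2: "?E ** diag_mat d = mat 1" using assms by (simp add: diag_mult diag_one[symmetric])
  show ?thesis unfolding matrix_inv_def
  proof (rule some_equality)
    show "diag_mat d ** ?E = mat 1 \<and> ?E ** diag_mat d = mat 1" using e1 e2 by simp
  next
    fix B assume "diag_mat d ** B = mat 1 \<and> B ** diag_mat d = mat 1"
    then have "B = B ** (diag_mat d ** ?E)" "B ** diag_mat d = mat 1" using e1 by auto
    then show "B = ?E" by (metis matrix_mul_assoc matrix_mul_lid)
  qed
qed

lemma W_sum: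
  "(\<Sum>k\<in>UNIV. W_mat P z $ i $ k * X $ k $ j) = (1 - z $ i) * (\<Sum>k\<in>UNIV. P $ i $ k * X $ k $ j) + z $ i * X $ i $ j"
proof -
  have "(\<Sum>k\<in>UNIV. W_mat P z $ i $ k * X $ k $ j)
      = (\<Sum>k\<in>UNIV. (1 - z $ i) * (P $ i $ k * X $ k $ j) + (if i = k then z $ i * X $ k $ j else 0))"
    unfolding W_entry by (rule sum.cong) (auto simp: algebra_simps)
  also have "\<dots> = (1 - z $ i) * (\<Sum>k\<in>UNIV. P $ i $ k * X $ k $ j) + z $ i * X $ i $ j"
    by (simp add: sum.distrib sum_distrib_left)
  finally show ?thesis .
qed

theorem lemma1:
  fixes P :: "real^'n^'n" and \<pi> :: "real^'n"
  assumes "row_stochastic P" and "irreducible_mat P" and "aperiodic_mat P"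
    and "prob_vector \<pi>" and "transpose P *v \<pi> = \<pi>"
  shows "\<forall>z::real^'n. (\<forall>i. 0 \<le> z $ i \<and> z $ i \<le> 1) \<longrightarrow>
    (\<exists>H. (\<lambda>t. mat_pow (W_mat P z) t) \<longlonglongrightarrow> H \<and> row_stochastic H \<and>
         (S_set z = {} \<longrightarrow> H = ones_outer (p_vec \<pi> z)) \<and>
         (S_set z \<noteq> {} \<longrightarrow> H_system P z H \<and> (\<forall>X. H_system P z X \<longrightarrow> X = H)))"
proof (intro allI impI)
  fix z :: "real^'n"
  assume zr: "\<forall>i. 0 \<le> z $ i \<and> z $ i \<le> 1"
  note rsP = assms(1)
  define A where "A = W_mat P z"
  have rsA: "row_stochastic A" unfolding A_def by (rule rs_W[OF rsP zr])
  have nnP: "\<And>i j. 0 \<le> P $ i $ j" using rsP by (simp add: row_stochastic_def)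
  have edge: "0 < A $ i $ k" if "z $ i \<noteq> 1" "0 < P $ i $ k" for i k
  proof -
    have "0 < 1 - z $ i" using zr that(1) by (simp add: order_less_le)
    then have "0 < (1 - z $ i) * P $ i $ k" using that(2) by simp
    moreover have "0 \<le> (if i = k then z $ i else 0)" using zr by simp
    ultimately show ?thesis unfolding A_def W_entry by linarith
  qed
  show "\<exists>H. (\<lambda>t. mat_pow (W_mat P z) t) \<longlonglongrightarrow> H \<and> row_stochastic H \<and>
         (S_set z = {} \<longrightarrow> H = ones_outer (p_vec \<pi> z)) \<and>
         (S_set z \<noteq> {} \<longrightarrow> H_system P z H \<and> (\<forall>X. H_system P z X \<longrightarrow> X = H))"
  proof (cases "S_set z = {}")
    case True
    have z1: "z $ i \<noteq> 1" for i using True unfolding S_set_def by auto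
    have zlt: "0 < 1 - z $ i" for i using zr z1[of i] by (simp add: order_less_le)
    have sub: "graph_edges P \<subseteq> graph_edges A" using edge z1 unfolding graph_edges_def by auto
    obtain M where M: "\<forall>i j. (i, j) \<in> (graph_edges P) ^^ M"
      using primitive[of "graph_edges P"] assms(2,3)
      unfolding irreducible_mat_def aperiodic_mat_def cycle_lengths_def by blast
    have pos: "\<forall>i j. 0 < mat_pow A M $ i $ j"
      using M relpow_mono'[OF sub, of M] pos_relpow[OF rsA] by blast
    define \<gamma> where "\<gamma> = gamma_fun \<pi> z"
    have pi_nn: "\<And>i. 0 \<le> \<pi> $ i" and pi_s: "(\<Sum>i\<in>UNIV. \<pi> $ i) = 1"
      using assms(4) by (auto simp: prob_vector_def)
    have g1: "1 \<le> \<gamma>"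
    proof -
      have "(\<Sum>i\<in>UNIV. \<pi> $ i) \<le> (\<Sum>i\<in>UNIV. \<pi> $ i / (1 - z $ i))"
      proof (rule sum_mono)
        fix i
        have "\<pi> $ i * (1 - z $ i) \<le> \<pi> $ i" using pi_nn[of i] zr by (simp add: mult_left_le)
        then show "\<pi> $ i \<le> \<pi> $ i / (1 - z $ i)" using zlt[of i] by (simp add: le_divide_eq)
      qed
      then show ?thesis using pi_s unfolding \<gamma>_def gamma_fun_def by simp
    qed
    have Dz: "mat 1 - diag_mat z = diag_mat (\<chi> i. 1 - z $ i)"
      by (simp add: vec_eq_iff diag_mat_def mat_def)
    have inv: "matrix_inv (mat 1 - diag_mat z) = diag_mat (\<chi> i. 1 / (1 - z $ i))"
      unfolding Dz by (subst diag_inv) (use z1 in auto)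
    have pk: "p_vec \<pi> z $ k = \<pi> $ k / ((1 - z $ k) * \<gamma>)" for k
    proof -
      have "(diag_mat (\<chi> i. 1 / (1 - z $ i)) *v \<pi>) $ k = (\<Sum>j\<in>UNIV. (if k = j then 1 / (1 - z $ k) else 0) * \<pi> $ j)"
        unfolding matrix_vector_mult_def diag_mat_def by (simp cong: if_cong)
      also have "\<dots> = (\<Sum>j\<in>UNIV. if j = k then \<pi> $ k / (1 - z $ k) else 0)"
        by (rule sum.cong) auto
      finally have "(diag_mat (\<chi> i. 1 / (1 - z $ i)) *v \<pi>) $ k = (\<Sum>j\<in>UNIV. if j = k then \<pi> $ k / (1 - z $ k) else 0)" .
      then show ?thesis unfolding p_vec_def inv \<gamma>_def by simp
    qed
    define p where "p = p_vec \<pi> z"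
    have pv: "prob_vector p"
    proof -
      have "0 \<le> p $ k" for k unfolding p_def pk using pi_nn[of k] zlt[of k] g1 by simp
      moreover have "(\<Sum>k\<in>UNIV. p $ k) = 1"
      proof -
        have "(\<Sum>k\<in>UNIV. p $ k) = (\<Sum>k\<in>UNIV. \<pi> $ k / (1 - z $ k)) / \<gamma>"
          unfolding p_def pk by (simp add: sum_divide_distrib)
        then show ?thesis using g1 unfolding \<gamma>_def gamma_fun_def by simp
      qed
      ultimately show ?thesis unfolding prob_vector_def by simp
    qed
    have pz: "p $ k * (1 - z $ k) = \<pi> $ k / \<gamma>" for k
    proof -
      have "1 - z $ k \<noteq> 0" "\<gamma> \<noteq> 0" using zlt[of k] g1 by auto
      then show ?thesis unfolding p_def pk by (simp add: field_simps)
    qed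
    have piP: "(\<Sum>i\<in>UNIV. \<pi> $ i * P $ i $ j) = \<pi> $ j" for j
    proof -
      have "(transpose P *v \<pi>) $ j = \<pi> $ j" using assms(5) by simp
      then show ?thesis by (simp add: matrix_vector_mult_def transpose_def mult.commute)
    qed
    have stat: "\<forall>j. (\<Sum>i\<in>UNIV. p $ i * A $ i $ j) = p $ j"
    proof
      fix j
      have "(\<Sum>i\<in>UNIV. p $ i * A $ i $ j)
          = (\<Sum>i\<in>UNIV. (\<pi> $ i / \<gamma>) * P $ i $ j + (if i = j then p $ j * z $ j else 0))"
        unfolding A_def W_entry by (rule sum.cong) (auto simp: algebra_simps pz[symmetric])
      also have "\<dots> = (\<Sum>i\<in>UNIV. \<pi> $ i * P $ i $ j) / \<gamma> + p $ j * z $ j"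
        by (simp add: sum.distrib sum_divide_distrib)
      also have "\<dots> = p $ j * (1 - z $ j) + p $ j * z $ j" using piP pz by simp
      also have "\<dots> = p $ j" by (simp add: algebra_simps)
      finally show "(\<Sum>i\<in>UNIV. p $ i * A $ i $ j) = p $ j" .
    qed
    have lim: "(\<lambda>t. mat_pow A t) \<longlonglongrightarrow> ones_outer p"
      by (rule case_empty[OF rsA pos pv stat])
    have "row_stochastic (ones_outer p)"
      using pv unfolding row_stochastic_def ones_outer_def prob_vector_def by simp
    then show ?thesis using lim True unfolding A_def p_def by blast
  next
    case False
    define S where "S = S_set z"
    have ab: "\<forall>i\<in>S. \<forall>j. A $ i $ j = (if i = j then 1 else 0)"
      unfolding S_def S_set_def A_def W_entry by auto
    obtain s0 where s0: "s0 \<in> S" using False S_def by blast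
    have reach0: "\<forall>i. \<exists>s\<in>S. (i, s) \<in> {(i, k). i \<notin> S \<and> 0 < A $ i $ k}\<^sup>*"
    proof
      fix i
      have "(i, s0) \<in> (graph_edges P)\<^sup>*" using assms(2) unfolding irreducible_mat_def by blast
      then show "\<exists>s\<in>S. (i, s) \<in> {(i, k). i \<notin> S \<and> 0 < A $ i $ k}\<^sup>*"
      proof (induction rule: converse_rtrancl_induct)
        case base
        then show ?case using s0 by blast
      next
        case (step y w)
        show ?case
        proof (cases "y \<in> S")
          case True
          then show ?thesis by blast
        next
          case False
          then have "(y, w) \<in> {(i, k). i \<notin> S \<and> 0 < A $ i $ k}"
            using edge[of y w] step(1) unfolding graph_edges_def S_def S_set_def by auto
          then show ?thesis using step(3) by (meson converse_rtrancl_into_rtrancl)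
        qed
      qed
    qed
    obtain H where H: "\<forall>i j. (\<lambda>t. mat_pow A t $ i $ j) \<longlonglongrightarrow> H $ i $ j"
      "\<forall>i j. j \<notin> S \<longrightarrow> H $ i $ j = 0" "\<forall>i\<in>S. \<forall>j. H $ i $ j = (if i = j then 1 else 0)"
      using case_nonempty[OF rsA ab reach0] by blast
    have lim: "(\<lambda>t. mat_pow A t) \<longlonglongrightarrow> H" by (rule mat_tendsto[OF H(1)])
    have rsH: "row_stochastic H" by (rule rs_limit[OF _ H(1)]) (use rs_pow[OF rsA] in blast)
    have HW: "H $ i $ j = (\<Sum>k\<in>UNIV. A $ i $ k * H $ k $ j)" for i j
    proof -
      have "(\<lambda>t. mat_pow A (Suc t) $ i $ j) \<longlonglongrightarrow> H $ i $ j"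
        using LIMSEQ_Suc[OF H(1)[rule_format, of i j]] .
      moreover have "(\<lambda>t. mat_pow A (Suc t) $ i $ j) \<longlonglongrightarrow> (\<Sum>k\<in>UNIV. A $ i $ k * H $ k $ j)"
        unfolding mat_pow_Suc_left mult_entry
        by (intro tendsto_sum tendsto_mult_left) (use H(1) in blast)
      ultimately show ?thesis using LIMSEQ_unique by blast
    qed
    have HS: "H_system P z H"
      unfolding H_system_def
    proof (intro conjI allI impI)
      fix i j assume i: "i \<notin> S_set z"
      have "H $ i $ j = (1 - z $ i) * (\<Sum>k\<in>UNIV. P $ i $ k * H $ k $ j) + z $ i * H $ i $ j"
        using HW[of i j] unfolding A_def W_sum .
      moreover have "1 - z $ i \<noteq> 0" using i unfolding S_set_def by simp
      ultimately show "H $ i $ j = (\<Sum>k\<in>UNIV. P $ i $ k * H $ k $ j)"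
        by (metis (no_types, lifting) add_diff_cancel_right' diff_diff_eq2 left_diff_distrib' mult_cancel_left mult_1)
    next
      fix i j assume "i \<in> S_set z"
      then show "H $ i $ j = (if i = j then 1 else 0)" using H(3) unfolding S_def by blast
    qed
    have uniq: "X = H" if X: "H_system P z X" for X
    proof -
      have XA: "A ** X = X"
      proof -
        have "(A ** X) $ i $ j = X $ i $ j" for i j
        proof (cases "i \<in> S")
          case True
          have "(A ** X) $ i $ j = (\<Sum>k\<in>UNIV. if k = i then X $ i $ j else 0)"
            unfolding mult_entry using ab True by (intro sum.cong) auto
          then show ?thesis by simp
        next
          case False
          then have "X $ i $ j = (\<Sum>k\<in>UNIV. P $ i $ k * X $ k $ j)"
            using X unfolding H_system_def S_def by blast
          then show ?thesis unfolding mult_entry A_def W_sum by (simp add: algebra_simps)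
        qed
        then show ?thesis by (simp add: vec_eq_iff)
      qed
      have XT: "mat_pow A t ** X = X" for t
        by (induction t) (simp_all add: matrix_mul_assoc[symmetric] XA)
      have "X $ i $ j = H $ i $ j" for i j
      proof -
        have "(\<lambda>t. (mat_pow A t ** X) $ i $ j) \<longlonglongrightarrow> (\<Sum>k\<in>UNIV. H $ i $ k * X $ k $ j)"
          unfolding mult_entry by (intro tendsto_sum tendsto_mult_right) (use H(1) in blast)
        then have "X $ i $ j = (\<Sum>k\<in>UNIV. H $ i $ k * X $ k $ j)" using XT LIMSEQ_unique[OF tendsto_const] by simp
        also have "\<dots> = (\<Sum>k\<in>UNIV. if k = j then H $ i $ j else 0)"
        proof (rule sum.cong)
          fix k
          show "H $ i $ k * X $ k $ j = (if k = j then H $ i $ j else 0)"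
          proof (cases "k \<in> S")
            case True
            then have "X $ k $ j = (if k = j then 1 else 0)" using X unfolding H_system_def S_def by blast
            then show ?thesis by simp
          next
            case False
            then have "H $ i $ k = 0" using H(2) by blast
            then show ?thesis by auto
          qed
        qed simp
        also have "\<dots> = H $ i $ j" by simp
        finally show ?thesis .
      qed
      then show ?thesis by (simp add: vec_eq_iff)
    qed
    show ?thesis using lim rsH HS uniq False unfolding A_def by blast
  qed
qed

end
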